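(* Let $K$ be a field with pairwise commuting derivations $\frac{d}{dx_1},\dots,\frac{d}{dx_k}$ and field of constants $C$. Then $$C(\partial_1,\dots,\partial_k)=\{x\in K(\partial_1,\dots,\partial_k)\mid x\partial_j=\partial_jx\ \text{for all }1\le j\le k\}.$$
   Context: $C=\{f\in K\mid \frac{d}{dx_i}f=0\ \forall i\}$. $K[\partial_1,\dots,\partial_k]$ is the ring of differential polynomials with usual addition and multiplication determined by $\partial_i\partial_j=\partial_j\partial_i$ and $\partial_ia=a\partial_i+\frac{d}{dx_i}(a)$ for $a\in K$; it satisfies the left Ore condition and $K(\partial_1,\dots,\partial_k)$ is its left division ring of fractions. $C(\partial_1,\dots,\partial_k)$ denotes the sub-division ring of $K(\partial_1,\dots,\partial_k)$ consisting of left fractions of elements of $C[\partial_1,\dots,\partial_k]$ (a commutative field, isomorphic to the rational function field over $C$ in $k$ variables). *)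

theory Defs
  imports Main
begin

definition derivation :: "('k::field \<Rightarrow> 'k) \<Rightarrow> bool" where
  "derivation \<delta> \<longleftrightarrow> (\<forall>a b. \<delta> (a + b) = \<delta> a + \<delta> b) \<and> (\<forall>a b. \<delta> (a * b) = a * \<delta> b + \<delta> a * b)"

definition constants :: "nat \<Rightarrow> (nat \<Rightarrow> 'k::field \<Rightarrow> 'k) \<Rightarrow> 'k set" where
  "constants k \<delta> = {a. \<forall>j<k. \<delta> j a = 0}"

text \<open>Coefficient families of differential polynomials: finitely supported functions on
  multi-indices alpha (with alpha j = 0 for j >= k).\<close>
definition msupp_ok :: "nat \<Rightarrow> ((nat \<Rightarrow> nat) \<Rightarrow> 'k::zero) \<Rightarrow> bool" where
  "msupp_ok k c \<longleftrightarrow> finite {\<alpha>. c \<alpha> \<noteq> 0} \<and> (\<forall>\<alpha>. c \<alpha> \<noteq> 0 \<longrightarrow> (\<forall>j\<ge>k. \<alpha> j = 0))"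

definition dmono :: "(nat \<Rightarrow> 'd::monoid_mult) \<Rightarrow> nat \<Rightarrow> (nat \<Rightarrow> nat) \<Rightarrow> 'd" where
  "dmono P k \<alpha> = foldr (\<lambda>j acc. P j ^ \<alpha> j * acc) [0..<k] 1"

definition dp_eval :: "('k::zero \<Rightarrow> 'd::ring_1) \<Rightarrow> (nat \<Rightarrow> 'd) \<Rightarrow> nat \<Rightarrow> ((nat \<Rightarrow> nat) \<Rightarrow> 'k) \<Rightarrow> 'd" where
  "dp_eval emb P k c = (\<Sum>\<alpha>\<in>{\<alpha>. c \<alpha> \<noteq> 0}. emb (c \<alpha>) * dmono P k \<alpha>)"

definition dpolys :: "('k::zero \<Rightarrow> 'd::ring_1) \<Rightarrow> (nat \<Rightarrow> 'd) \<Rightarrow> nat \<Rightarrow> 'k set \<Rightarrow> 'd set" where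
  "dpolys emb P k S = {dp_eval emb P k c | c. msupp_ok k c \<and> (\<forall>\<alpha>. c \<alpha> \<in> S)}"

definition left_fracs :: "'d::division_ring set \<Rightarrow> 'd set" where
  "left_fracs R = {inverse s * r | s r. s \<in> R \<and> r \<in> R \<and> s \<noteq> 0}"

text \<open>The division ring 'd (with embedding emb of K and elements P j playing the role of
  the partial derivatives) is the left division ring of fractions of K[d_1,...,d_k]:
  emb is a ring embedding, the P j commute, P j a = a P j + delta_j(a), the monomials are
  left K-linearly independent (so K[d] embeds), and every element is a left fraction.\<close>
definition diff_frac_ring ::
  "nat \<Rightarrow> (nat \<Rightarrow> 'k::field \<Rightarrow> 'k) \<Rightarrow> ('k \<Rightarrow> 'd::division_ring) \<Rightarrow> (nat \<Rightarrow> 'd) \<Rightarrow> bool" where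
  "diff_frac_ring k \<delta> emb P \<longleftrightarrow>
     (\<forall>a b. emb (a + b) = emb a + emb b) \<and> (\<forall>a b. emb (a * b) = emb a * emb b) \<and> emb 1 = 1 \<and>
     (\<forall>i<k. \<forall>j<k. P i * P j = P j * P i) \<and>
     (\<forall>i<k. \<forall>a. P i * emb a = emb a * P i + emb (\<delta> i a)) \<and>
     (\<forall>c. msupp_ok k c \<and> dp_eval emb P k c = 0 \<longrightarrow> (\<forall>\<alpha>. c \<alpha> = 0)) \<and>
     UNIV = left_fracs (dpolys emb P k UNIV)"

end

theory Submission
  imports Defs
begin

lemma dp_eval_superset:
  assumes "emb 0 = 0" "finite S" "{\<alpha>. c \<alpha> \<noteq> 0} \<subseteq> S"
  shows "dp_eval emb P k c = (\<Sum>\<alpha>\<in>S. emb (c \<alpha>) * dmono P k \<alpha>)"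
  unfolding dp_eval_def by (rule sum.mono_neutral_left) (use assms in auto)

lemma foldr_comm:
  fixes P :: "nat \<Rightarrow> 'd::monoid_mult"
  assumes "\<forall>j\<in>set xs. Q * P j = P j * Q"
  shows "Q * foldr (\<lambda>j acc. P j ^ \<alpha> j * acc) xs 1 = foldr (\<lambda>j acc. P j ^ \<alpha> j * acc) xs 1 * Q"
  using assms
proof (induction xs)
  case Nil then show ?case by simp
next
  case (Cons a xs)
  have h: "P a ^ \<alpha> a * Q = Q * P a ^ \<alpha> a"
    by (rule power_commuting_commutes) (use Cons.prems in auto)
  have "Q * foldr (\<lambda>j acc. P j ^ \<alpha> j * acc) (a # xs) 1
      = (Q * P a ^ \<alpha> a) * foldr (\<lambda>j acc. P j ^ \<alpha> j * acc) xs 1" by (simp add: mult.assoc)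
  also have "\<dots> = P a ^ \<alpha> a * (Q * foldr (\<lambda>j acc. P j ^ \<alpha> j * acc) xs 1)"
    using h by (metis mult.assoc)
  also have "\<dots> = P a ^ \<alpha> a * (foldr (\<lambda>j acc. P j ^ \<alpha> j * acc) xs 1 * Q)"
    using Cons by simp
  finally show ?case by (simp add: mult.assoc)
qed

lemma dmono_comm:
  assumes "i < k" "\<forall>i<k. \<forall>j<k. P i * P j = P j * P i"
  shows "P i * dmono P k \<alpha> = dmono P k \<alpha> * P i"
  unfolding dmono_def by (rule foldr_comm) (use assms in auto)

lemma comm_lemma:
  fixes emb :: "'k::field \<Rightarrow> 'd::division_ring"
  assumes emb0: "emb 0 = 0" and d0: "\<delta> 0 = 0" and ik: "i < k"
    and Pc: "\<forall>i<k. \<forall>j<k. P i * P j = P j * P i"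
    and Pe: "\<forall>a. P i * emb a = emb a * P i + emb (\<delta> a)"
    and fin: "finite {\<alpha>. c \<alpha> \<noteq> 0}"
  shows "P i * dp_eval emb P k c = dp_eval emb P k c * P i + dp_eval emb P k (\<lambda>\<alpha>. \<delta> (c \<alpha>))"
proof -
  let ?S = "{\<alpha>. c \<alpha> \<noteq> 0}"
  have e1: "dp_eval emb P k c = (\<Sum>\<alpha>\<in>?S. emb (c \<alpha>) * dmono P k \<alpha>)"
    by (rule dp_eval_superset) (use emb0 fin in auto)
  have e2: "dp_eval emb P k (\<lambda>\<alpha>. \<delta> (c \<alpha>)) = (\<Sum>\<alpha>\<in>?S. emb (\<delta> (c \<alpha>)) * dmono P k \<alpha>)"
    by (rule dp_eval_superset) (use emb0 fin d0 in auto)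
  have t: "P i * (emb (c \<alpha>) * dmono P k \<alpha>) = emb (c \<alpha>) * dmono P k \<alpha> * P i + emb (\<delta> (c \<alpha>)) * dmono P k \<alpha>" for \<alpha>
  proof -
    have "P i * (emb (c \<alpha>) * dmono P k \<alpha>) = (emb (c \<alpha>) * P i + emb (\<delta> (c \<alpha>))) * dmono P k \<alpha>"
      using Pe by (simp add: mult.assoc[symmetric])
    also have "\<dots> = emb (c \<alpha>) * (P i * dmono P k \<alpha>) + emb (\<delta> (c \<alpha>)) * dmono P k \<alpha>"
      by (simp add: distrib_right mult.assoc)
    also have "\<dots> = emb (c \<alpha>) * dmono P k \<alpha> * P i + emb (\<delta> (c \<alpha>)) * dmono P k \<alpha>"
      using dmono_comm[OF ik Pc] by (simp add: mult.assoc)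
    finally show ?thesis .
  qed
  show ?thesis
    unfolding e1 e2 sum_distrib_left sum_distrib_right t sum.distrib by simp
qed

lemma emb_left:
  fixes emb :: "'k::field \<Rightarrow> 'd::division_ring"
  assumes emb0: "emb 0 = 0" and embm: "\<forall>a b. emb (a * b) = emb a * emb b"
    and fin: "finite {\<alpha>. c \<alpha> \<noteq> 0}"
  shows "emb a * dp_eval emb P k c = dp_eval emb P k (\<lambda>\<alpha>. a * c \<alpha>)"
proof -
  let ?S = "{\<alpha>. c \<alpha> \<noteq> 0}"
  have e1: "dp_eval emb P k c = (\<Sum>\<alpha>\<in>?S. emb (c \<alpha>) * dmono P k \<alpha>)"
    by (rule dp_eval_superset) (use emb0 fin in auto)
  have e2: "dp_eval emb P k (\<lambda>\<alpha>. a * c \<alpha>) = (\<Sum>\<alpha>\<in>?S. emb (a * c \<alpha>) * dmono P k \<alpha>)"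
    by (rule dp_eval_superset) (use emb0 fin in auto)
  show ?thesis unfolding e1 e2 sum_distrib_left using embm by (simp add: mult.assoc)
qed

lemma dp_eval_zero: "dp_eval emb P k (\<lambda>\<alpha>. 0) = 0"
  unfolding dp_eval_def by simp

theorem mainTheorem18:
  fixes k :: nat and \<delta> :: "nat \<Rightarrow> 'k::field \<Rightarrow> 'k"
    and emb :: "'k \<Rightarrow> 'd::division_ring" and P :: "nat \<Rightarrow> 'd"
  assumes "\<forall>j<k. derivation (\<delta> j)"
    and "\<forall>i<k. \<forall>j<k. \<forall>a. \<delta> i (\<delta> j a) = \<delta> j (\<delta> i a)"
    and "diff_frac_ring k \<delta> emb P"
  shows "left_fracs (dpolys emb P k (constants k \<delta>)) = {x. \<forall>j<k. x * P j = P j * x}"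
proof -
  note D = assms(3)[unfolded diff_frac_ring_def]
  have embadd: "\<forall>a b. emb (a + b) = emb a + emb b" using D by blast
  have embm: "\<forall>a b. emb (a * b) = emb a * emb b" using D by blast
  have emb1: "emb 1 = 1" using D by blast
  have Pc: "\<forall>i<k. \<forall>j<k. P i * P j = P j * P i" using D by blast
  have Pe: "\<forall>i<k. \<forall>a. P i * emb a = emb a * P i + emb (\<delta> i a)" using D by blast
  have indep: "\<And>c. msupp_ok k c \<Longrightarrow> dp_eval emb P k c = 0 \<Longrightarrow> (\<forall>\<alpha>. c \<alpha> = 0)" using D by blast
  have fr: "UNIV = left_fracs (dpolys emb P k UNIV)" using D by blast
  have emb0: "emb 0 = 0" using embadd[rule_format, of 0 0] by simp
  have d0: "\<delta> j 0 = 0" if "j < k" for j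
    using assms(1) that unfolding derivation_def
    by (metis add_cancel_right_right add_0)
  have d1: "\<delta> j 1 = 0" if "j < k" for j
  proof -
    have "\<delta> j (1 * 1) = 1 * \<delta> j 1 + \<delta> j 1 * 1"
      using assms(1) that unfolding derivation_def by blast
    then have "\<delta> j 1 + \<delta> j 1 = \<delta> j 1 + 0" by simp
    then show ?thesis by (simp only: add_left_cancel)
  qed
  have fin: "finite {\<alpha>. c \<alpha> \<noteq> 0}" if "msupp_ok k c" for c :: "(nat \<Rightarrow> nat) \<Rightarrow> 'k"
    using that unfolding msupp_ok_def by blast
  have comm: "P j * dp_eval emb P k c = dp_eval emb P k c * P j + dp_eval emb P k (\<lambda>\<alpha>. \<delta> j (c \<alpha>))"
    if "j < k" "msupp_ok k c" for j c
    by (rule comm_lemma[of emb "\<delta> j" j k P c, OF emb0 d0[OF that(1)] that(1) Pc]) (use Pe that fin in auto)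
  have ok_d: "msupp_ok k (\<lambda>\<alpha>. \<delta> j (c \<alpha>))" if "j < k" "msupp_ok k c" for j c
  proof -
    have "{\<alpha>. \<delta> j (c \<alpha>) \<noteq> 0} \<subseteq> {\<alpha>. c \<alpha> \<noteq> 0}" using d0[OF that(1)] by auto
    then show ?thesis using that(2) unfolding msupp_ok_def by (auto intro: finite_subset)
  qed
  have ok_m: "msupp_ok k (\<lambda>\<alpha>. a * c \<alpha>)" if "msupp_ok k c" for a :: 'k and c :: "(nat \<Rightarrow> nat) \<Rightarrow> 'k"
  proof -
    have "{\<alpha>. a * c \<alpha> \<noteq> 0} \<subseteq> {\<alpha>. c \<alpha> \<noteq> 0}" by auto
    then show ?thesis using that unfolding msupp_ok_def by (auto intro: finite_subset)
  qed
  have dp_nz: "dp_eval emb P k c \<noteq> 0" if "msupp_ok k c" "c \<alpha> \<noteq> 0" for c \<alpha>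
    using indep[OF that(1)] that(2) by blast
  have diffin: "P j * r - r * P j \<in> dpolys emb P k UNIV" if jr: "j < k" "r \<in> dpolys emb P k UNIV" for j r
  proof -
    obtain d where d: "msupp_ok k d" "r = dp_eval emb P k d" using jr(2) unfolding dpolys_def by blast
    have "P j * r - r * P j = dp_eval emb P k (\<lambda>\<alpha>. \<delta> j (d \<alpha>))" using comm[OF that(1) d(1)] d(2) by simp
    then show ?thesis unfolding dpolys_def using ok_d[OF that(1) d(1)] by blast
  qed
  show ?thesis
  proof (intro equalityI subsetI)
    fix y assume "y \<in> left_fracs (dpolys emb P k (constants k \<delta>))"
    then obtain s r where sr: "y = inverse s * r" "s \<in> dpolys emb P k (constants k \<delta>)"
      "r \<in> dpolys emb P k (constants k \<delta>)" "s \<noteq> 0" unfolding left_fracs_def by blast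
    have cc: "P j * q = q * P j" if jq: "j < k" "q \<in> dpolys emb P k (constants k \<delta>)" for j q
    proof -
      obtain c where c: "msupp_ok k c" "\<forall>\<alpha>. c \<alpha> \<in> constants k \<delta>" "q = dp_eval emb P k c"
        using jq(2) unfolding dpolys_def by blast
      have "(\<lambda>\<alpha>. \<delta> j (c \<alpha>)) = (\<lambda>\<alpha>. 0)" using c(2) jq(1) unfolding constants_def by auto
      then show ?thesis using comm[OF jq(1) c(1)] c(3) dp_eval_zero by simp
    qed
    show "y \<in> {x. \<forall>j<k. x * P j = P j * x}"
    proof (safe)
      fix j assume j: "j < k"
      have a: "P j * s = s * P j" and b: "P j * r = r * P j" using cc[OF j] sr by auto
      have "inverse s * P j = inverse s * (P j * s) * inverse s" using sr(4)
        by (simp add: mult.assoc)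
      also have "\<dots> = P j * inverse s" using a sr(4) by (simp add: mult.assoc[symmetric])
      finally have "inverse s * P j = P j * inverse s" .
      then show "y * P j = P j * y" using b sr(1)
        by (metis mult.assoc)
    qed
  next
    fix x assume "x \<in> {x. \<forall>j<k. x * P j = P j * x}"
    then have xc: "\<forall>j<k. x * P j = P j * x" by simp
    define M where "M = {c. msupp_ok k c \<and> (\<exists>\<alpha>. c \<alpha> \<noteq> 0) \<and> dp_eval emb P k c * x \<in> dpolys emb P k UNIV}"
    have "x \<in> left_fracs (dpolys emb P k UNIV)" using fr by blast
    then obtain s r where sr: "x = inverse s * r" "s \<in> dpolys emb P k UNIV" "r \<in> dpolys emb P k UNIV" "s \<noteq> 0"
      unfolding left_fracs_def by blast
    obtain cs where cs: "msupp_ok k cs" "s = dp_eval emb P k cs" using sr(2) unfolding dpolys_def by blast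
    have "\<exists>\<alpha>. cs \<alpha> \<noteq> 0" using cs sr(4) dp_eval_zero
      by (metis (no_types) ext)
    moreover have "s * x = r" using sr(1,4) by (simp add: mult.assoc[symmetric])
    ultimately have "cs \<in> M" using cs sr(3) unfolding M_def by auto
    then obtain c where cM: "c \<in> M" and cmin: "\<forall>c'. c' \<in> M \<longrightarrow> card {\<alpha>. c \<alpha> \<noteq> 0} \<le> card {\<alpha>. c' \<alpha> \<noteq> 0}"
      using ex_has_least_nat[of "\<lambda>c. c \<in> M" cs "\<lambda>c. card {\<alpha>. c \<alpha> \<noteq> 0}"] by blast
    from cM obtain \<alpha>0 where a0: "c \<alpha>0 \<noteq> 0" unfolding M_def by blast
    define c' where "c' = (\<lambda>\<alpha>. inverse (c \<alpha>0) * c \<alpha>)"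
    have okc: "msupp_ok k c" using cM unfolding M_def by blast
    have okc': "msupp_ok k c'" unfolding c'_def by (rule ok_m[OF okc])
    have c'a0: "c' \<alpha>0 = 1" using a0 unfolding c'_def by simp
    have supp': "{\<alpha>. c' \<alpha> \<noteq> 0} = {\<alpha>. c \<alpha> \<noteq> 0}" using a0 unfolding c'_def by auto
    have ev': "dp_eval emb P k c' = emb (inverse (c \<alpha>0)) * dp_eval emb P k c"
      unfolding c'_def by (rule emb_left[OF emb0 embm fin[OF okc], symmetric])
    have rin: "dp_eval emb P k c' * x \<in> dpolys emb P k UNIV"
    proof -
      obtain d where d: "msupp_ok k d" "dp_eval emb P k c * x = dp_eval emb P k d"
        using cM unfolding M_def dpolys_def by blast
      have "dp_eval emb P k c' * x = dp_eval emb P k (\<lambda>\<alpha>. inverse (c \<alpha>0) * d \<alpha>)"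
        using ev' d(2) emb_left[OF emb0 embm fin[OF d(1)]] by (simp add: mult.assoc)
      then show ?thesis unfolding dpolys_def using ok_m[OF d(1)] by blast
    qed
    have const: "\<delta> j (c' \<alpha>) = 0" if j: "j < k" for j \<alpha>
    proof (rule ccontr)
      assume nz: "\<delta> j (c' \<alpha>) \<noteq> 0"
      let ?e = "\<lambda>\<alpha>. \<delta> j (c' \<alpha>)"
      have oke: "msupp_ok k ?e" by (rule ok_d[OF j okc'])
      have cm: "P j * dp_eval emb P k c' = dp_eval emb P k c' * P j + dp_eval emb P k ?e"
        by (rule comm[OF j okc'])
      have xj: "x * P j = P j * x" using xc j by blast
      have "P j * (dp_eval emb P k c' * x) - (dp_eval emb P k c' * x) * P j
          = (P j * dp_eval emb P k c') * x - dp_eval emb P k c' * (x * P j)"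
        by (simp add: mult.assoc)
      also have "\<dots> = (dp_eval emb P k c' * P j + dp_eval emb P k ?e) * x - dp_eval emb P k c' * (P j * x)"
        using cm xj by simp
      also have "\<dots> = dp_eval emb P k ?e * x" by (simp add: distrib_right mult.assoc)
      finally have "dp_eval emb P k ?e * x = P j * (dp_eval emb P k c' * x) - (dp_eval emb P k c' * x) * P j"
        by simp
      then have "dp_eval emb P k ?e * x \<in> dpolys emb P k UNIV" using diffin[OF j rin] by simp
      then have "?e \<in> M" unfolding M_def using oke nz by blast
      then have le: "card {\<alpha>. c \<alpha> \<noteq> 0} \<le> card {\<alpha>. ?e \<alpha> \<noteq> 0}" using cmin by blast
      have sub: "{\<alpha>. ?e \<alpha> \<noteq> 0} \<subseteq> {\<alpha>. c' \<alpha> \<noteq> 0} - {\<alpha>0}" using d0[OF j] d1[OF j] c'a0 by auto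
      have fc: "finite {\<alpha>. c' \<alpha> \<noteq> 0}" using fin[OF okc'] .
      have "card {\<alpha>. ?e \<alpha> \<noteq> 0} < card {\<alpha>. c' \<alpha> \<noteq> 0}"
      proof -
        have "card {\<alpha>. ?e \<alpha> \<noteq> 0} \<le> card ({\<alpha>. c' \<alpha> \<noteq> 0} - {\<alpha>0})"
          by (rule card_mono) (use sub fc in auto)
        also have "\<dots> < card {\<alpha>. c' \<alpha> \<noteq> 0}"
          by (rule card_Diff1_less) (use fc c'a0 in auto)
        finally show ?thesis .
      qed
      then show False using le supp' by simp
    qed
    define s' where "s' = dp_eval emb P k c'"
    have s'nz: "s' \<noteq> 0" unfolding s'_def using dp_nz[OF okc', of \<alpha>0] c'a0 by simp
    have s'c: "s' \<in> dpolys emb P k (constants k \<delta>)"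
      unfolding dpolys_def constants_def s'_def using okc' const by blast
    have s'comm: "P j * s' = s' * P j" if j: "j < k" for j
    proof -
      have "(\<lambda>\<alpha>. \<delta> j (c' \<alpha>)) = (\<lambda>\<alpha>. 0)" using const[OF j] by auto
      then show ?thesis using comm[OF j okc'] dp_eval_zero unfolding s'_def by simp
    qed
    obtain d where d: "msupp_ok k d" "s' * x = dp_eval emb P k d"
      using rin unfolding s'_def dpolys_def by blast
    have dconst: "\<delta> j (d \<alpha>) = 0" if j: "j < k" for j \<alpha>
    proof -
      have "P j * (s' * x) = (s' * x) * P j"
        using s'comm[OF j] xc j by (metis mult.assoc)
      then have "dp_eval emb P k (\<lambda>\<alpha>. \<delta> j (d \<alpha>)) = 0" using comm[OF j d(1)] d(2) by simp
      then show ?thesis using indep[OF ok_d[OF j d(1)]] by blast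
    qed
    have rc: "s' * x \<in> dpolys emb P k (constants k \<delta>)"
      unfolding dpolys_def constants_def using d dconst by blast
    have "x = inverse s' * (s' * x)" using s'nz by (simp add: mult.assoc[symmetric])
    then show "x \<in> left_fracs (dpolys emb P k (constants k \<delta>))"
      unfolding left_fracs_def using s'c rc s'nz by blast
  qed
qed

end
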